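(* Let $U\subset\mathbb{C}$ be a simply connected domain, $A_1,\dots,A_r$ analytic functions on $U$, $p\in U$ with $A_i(p)\ne A_j(p)$ for $i\ne j$, and $H_i(z)=\Re\int_p^zA_i(w)\,dw$. Let $K$ be the convex hull of $\{A_1(p),\dots,A_r(p)\}$ and assume that the only points $A_i(p)$ lying on the boundary $\partial K$ are extreme points of $K$. Let $S(p)=\{i: A_i(p)\text{ is an extreme point of }K\}$ and $W_i=\{z\in U:\max_{1\le j\le r}H_j(z)=H_i(z)\}$. Then (i) $\max_{1\le i\le r}H_i(z)=\max_{i\in S(p)}H_i(z)$ in a neighborhood of $p$; (ii) there is a neighborhood $N$ of $p$ such that $\bigcup_{i\in S(p)}(N\cap W_i)=N$. *)

theory Defs
  imports "HOL-Complex_Analysis.Complex_Analysis"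
begin

text \<open>Re of the integral of f from p to z along a (chosen) valid path in U.
  For f holomorphic on a simply connected domain U this is independent of the path.\<close>
definition re_path_integral ::
  "complex set \<Rightarrow> (complex \<Rightarrow> complex) \<Rightarrow> complex \<Rightarrow> complex \<Rightarrow> real" where
  "re_path_integral U f p z =
     Re (contour_integral
           (SOME g. valid_path g \<and> path_image g \<subseteq> U \<and> pathstart g = p \<and> pathfinish g = z) f)"

end

theory Submission
  imports Defs
begin

lemma cnj_sgn_mult: "cnj (sgn d) * d = complex_of_real (cmod d)"
proof (cases "d=0")
  case False
  have "cnj (sgn d) * d = (d * cnj d) / complex_of_real (cmod d)"
    by (simp add: sgn_div_norm scaleR_conv_of_real divide_inverse mult.commute mult.left_commute)
  also have "\<dots> = complex_of_real (cmod d)" using False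
    unfolding complex_norm_square[symmetric] by (simp add: power2_eq_square)
  finally show ?thesis .
qed simp
lemma deriv_ev:
  assumes "(f has_field_derivative d) (at p)" "e > 0"
  shows "eventually (\<lambda>z. norm (f z - f p - d*(z-p)) \<le> e * norm (z-p)) (nhds p)"
proof -
  from assms(1) have "(f has_derivative ((*) d)) (at p)" by (simp add: has_field_derivative_def)
  then obtain r where "r>0" "\<forall>y. norm(y - p) < r \<longrightarrow> norm (f y - f p - d * (y - p)) \<le> e * norm (y - p)"
    using has_derivative_at_alt assms(2) by metis
  then show ?thesis unfolding eventually_nhds_metric
    by (metis dist_norm mult.commute)
qed
lemma convmax:
  fixes T :: "complex set" and w v :: complex
  assumes "finite T" "T \<noteq> {}" "w \<in> convex hull T"
  shows "Re (w * v) \<le> Max ((\<lambda>t. Re (t * v)) ` T)"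
proof -
  let ?M = "Max ((\<lambda>t. Re (t * v)) ` T)"
  have "convex {x. Re (x * v) \<le> ?M}"
  proof (rule convexI, simp only: mem_Collect_eq)
    fix x y :: complex and u w :: real
    assume h: "Re (x * v) \<le> ?M" "Re (y * v) \<le> ?M" "0 \<le> u" "0 \<le> w" "u + w = 1"
    have "Re ((u *\<^sub>R x + w *\<^sub>R y) * v) = u * Re (x * v) + w * Re (y * v)"
      by (simp add: algebra_simps)
    also have "\<dots> \<le> u * ?M + w * ?M" using h by (intro add_mono mult_left_mono) auto
    also have "\<dots> = ?M" using h by (simp add: algebra_simps flip: distrib_right)
    finally show "Re ((u *\<^sub>R x + w *\<^sub>R y) * v) \<le> ?M" .
  qed
  moreover have "T \<subseteq> {x. Re (x * v) \<le> ?M}" using assms by auto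
  ultimately have "convex hull T \<subseteq> {x. Re (x * v) \<le> ?M}" by (rule hull_minimal[rotated])
  then show ?thesis using assms by auto
qed

lemma H_formula:
  assumes U: "open U" "connected U" and p: "p \<in> U" and z: "z \<in> U"
    and F: "\<And>w. w \<in> U \<Longrightarrow> (F has_field_derivative f w) (at w)"
  shows "re_path_integral U f p z = Re (F z - F p)"
proof -
  let ?P = "\<lambda>g. valid_path g \<and> path_image g \<subseteq> U \<and> pathstart g = p \<and> pathfinish g = z"
  obtain g0 where "polynomial_function g0" "path_image g0 \<subseteq> U" "pathstart g0 = p" "pathfinish g0 = z"
    using connected_open_polynomial_connected[OF U(1) U(2) p z] by blast
  then have "?P g0" by (simp add: valid_path_polynomial_function)
  then have g: "?P (SOME g. ?P g)" by (rule someI[of ?P g0])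
  have "(f has_contour_integral (F (pathfinish (SOME g. ?P g)) - F (pathstart (SOME g. ?P g)))) (SOME g. ?P g)"
    by (rule contour_integral_primitive[where S=U]) (use g F in \<open>auto intro: has_field_derivative_at_within\<close>)
  then show ?thesis using g unfolding re_path_integral_def
    by (simp add: contour_integral_unique)
qed

theorem lemma6:
  fixes U :: "complex set" and A :: "nat \<Rightarrow> complex \<Rightarrow> complex"
    and p :: complex and r :: nat
    and H :: "nat \<Rightarrow> complex \<Rightarrow> real"
    and K :: "complex set" and S :: "nat set" and W :: "nat \<Rightarrow> complex set"
  assumes U: "open U" "connected U" "simply_connected U"
    and r: "r \<ge> 1"
    and hol: "\<And>i. i \<in> {1..r} \<Longrightarrow> A i holomorphic_on U"
    and p: "p \<in> U"
    and dist: "\<And>i j. i \<in> {1..r} \<Longrightarrow> j \<in> {1..r} \<Longrightarrow> i \<noteq> j \<Longrightarrow> A i p \<noteq> A j p"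
    and H_def: "\<And>i z. H i z = re_path_integral U (A i) p z"
    and K_def: "K = convex hull ((\<lambda>i. A i p) ` {1..r})"
    and bdry: "\<And>i. i \<in> {1..r} \<Longrightarrow> A i p \<in> frontier K \<Longrightarrow> A i p extreme_point_of K"
    and S_def: "S = {i \<in> {1..r}. A i p extreme_point_of K}"
    and W_def: "\<And>i. W i = {z \<in> U. Max ((\<lambda>j. H j z) ` {1..r}) = H i z}"
  shows "(\<forall>\<^sub>F z in nhds p. Max ((\<lambda>i. H i z) ` {1..r}) = Max ((\<lambda>i. H i z) ` S))
    \<and> (\<exists>N. open N \<and> p \<in> N \<and> (\<Union>i\<in>S. N \<inter> W i) = N)"
proof -
  define a where "a i = A i p" for i
  have "\<exists>F. \<forall>z. z \<in> U \<longrightarrow> (F has_field_derivative A i z) (at z)" if "i \<in> {1..r}" for i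
    using U(3) hol[OF that] unfolding simply_connected_eq_global_primitive[OF U(1)] by blast
  then obtain F where F: "\<And>i z. i \<in> {1..r} \<Longrightarrow> z \<in> U \<Longrightarrow> (F i has_field_derivative A i z) (at z)"
    by metis
  define G where "G i z = F i z - F i p" for i z
  have HG: "H i z = Re (G i z)" if "i \<in> {1..r}" "z \<in> U" for i z
    unfolding H_def G_def by (rule H_formula[OF U(1,2) p that(2)]) (use F that in auto)
  have SS: "S \<subseteq> {1..r}" "finite S" using S_def by auto
  have Kc: "compact K" "convex K" unfolding K_def
    by (auto intro: finite_imp_compact_convex_hull)
  have ext: "{x. x extreme_point_of K} = a ` S"
  proof
    show "{x. x extreme_point_of K} \<subseteq> a ` S"
    proof
      fix x assume "x \<in> {x. x extreme_point_of K}"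
      then have x: "x extreme_point_of K" by simp
      then have "x \<in> (\<lambda>i. A i p) ` {1..r}" using extreme_points_of_convex_hull K_def by blast
      then obtain i where "i \<in> {1..r}" "x = A i p" by blast
      then show "x \<in> a ` S" using x S_def a_def by auto
    qed
  qed (auto simp: S_def a_def)
  have KS: "K = convex hull (a ` S)" using Krein_Milman_Minkowski[OF Kc] ext by simp
  have "K \<noteq> {}" unfolding K_def using r by auto
  then have Sne: "S \<noteq> {}" using KS by auto
  have key: "\<forall>\<^sub>F z in nhds p. H i z \<le> Max ((\<lambda>k. H k z) ` S)" if i: "i \<in> {1..r} - S" for i
  proof -
    have "a i \<in> K" unfolding K_def a_def using i by (auto intro: hull_inc)
    moreover have "a i \<notin> frontier K" using bdry[of i] i S_def a_def by auto
    ultimately have "a i \<in> interior K" unfolding frontier_def using closure_subset by auto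
    then obtain e where e: "e > 0" "cball (a i) e \<subseteq> K" using mem_interior_cball by blast
    have ev: "\<forall>\<^sub>F z in nhds p. \<forall>j\<in>{1..r}. norm (G j z - a j * (z - p)) \<le> (e/2) * norm (z - p)"
    proof (rule eventually_ball_finite, simp, intro ballI)
      fix j assume j: "j \<in> {1..r}"
      show "\<forall>\<^sub>F z in nhds p. norm (G j z - a j * (z - p)) \<le> (e/2) * norm (z - p)"
        unfolding G_def a_def using deriv_ev[OF F[OF j p], of "e/2"] e by (simp add: algebra_simps)
    qed
    have evU: "\<forall>\<^sub>F z in nhds p. z \<in> U" using U(1) p eventually_nhds by blast
    show ?thesis using ev evU
    proof eventually_elim
      case (elim z)
      define d where "d = z - p"
      define w where "w = a i + of_real e * cnj (sgn d)"
      have "dist (a i) w \<le> e" unfolding w_def dist_norm using e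
        by (cases "d = 0") (auto simp: norm_mult norm_sgn)
      then have "w \<in> K" using e by auto
      then have c1: "Re (w * d) \<le> Max ((\<lambda>t. Re (t * d)) ` (a ` S))"
        using convmax[of "a ` S" w d] KS SS Sne by auto
      have "Max ((\<lambda>t. Re (t * d)) ` (a ` S)) \<in> (\<lambda>t. Re (t * d)) ` (a ` S)"
        by (rule Max_in) (use SS Sne in auto)
      then obtain t where t: "t \<in> a ` S" "Max ((\<lambda>t. Re (t * d)) ` (a ` S)) = Re (t * d)"
        by blast
      then obtain k where k: "k \<in> S" "t = a k" by auto
      have 1: "Re (w * d) \<le> Re (a k * d)" using c1 t k by simp
      have 2: "Re (w * d) = Re (a i * d) + e * norm d"
        unfolding w_def by (simp add: distrib_right mult.assoc cnj_sgn_mult)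
      have kr: "k \<in> {1..r}" using k SS by auto
      have b3: "norm (G i z - a i * d) \<le> (e/2) * norm d" using elim(1) i unfolding d_def by blast
      have r3: "Re (G i z - a i * d) \<le> norm (G i z - a i * d)" by (rule complex_Re_le_cmod)
      have 3: "Re (G i z) \<le> Re (a i * d) + (e/2) * norm d"
        using b3 r3 unfolding minus_complex.sel by linarith
      have b4: "norm (G k z - a k * d) \<le> (e/2) * norm d" using elim(1) kr unfolding d_def by blast
      have r4: "\<bar>Re (G k z - a k * d)\<bar> \<le> norm (G k z - a k * d)" by (rule abs_Re_le_cmod)
      have 4: "Re (a k * d) - (e/2) * norm d \<le> Re (G k z)"
        using b4 r4 unfolding minus_complex.sel by linarith
      have "H i z \<le> H k z" using 1 2 3 4 HG[of i z] HG[of k z] i kr elim(2) by auto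
      also have "\<dots> \<le> Max ((\<lambda>k. H k z) ` S)" using k SS by auto
      finally show ?case .
    qed
  qed
  have ev1: "\<forall>\<^sub>F z in nhds p. \<forall>i\<in>{1..r} - S. H i z \<le> Max ((\<lambda>k. H k z) ` S)"
    by (rule eventually_ball_finite) (use key in auto)
  have P1: "\<forall>\<^sub>F z in nhds p. Max ((\<lambda>i. H i z) ` {1..r}) = Max ((\<lambda>i. H i z) ` S)"
    using ev1
  proof eventually_elim
    case (elim z)
    show ?case
    proof (rule antisym)
      show "Max ((\<lambda>i. H i z) ` {1..r}) \<le> Max ((\<lambda>i. H i z) ` S)"
        using elim SS Sne r by (subst Max_le_iff) auto
      show "Max ((\<lambda>i. H i z) ` S) \<le> Max ((\<lambda>i. H i z) ` {1..r})"
        using SS Sne by (intro Max_mono) auto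
    qed
  qed
  then obtain N where N: "open N" "p \<in> N" "\<And>z. z \<in> N \<Longrightarrow> Max ((\<lambda>i. H i z) ` {1..r}) = Max ((\<lambda>i. H i z) ` S)"
    unfolding eventually_nhds by blast
  have "(\<Union>i\<in>S. (N \<inter> U) \<inter> W i) = N \<inter> U"
  proof
    show "N \<inter> U \<subseteq> (\<Union>i\<in>S. (N \<inter> U) \<inter> W i)"
    proof
      fix z assume z: "z \<in> N \<inter> U"
      have "Max ((\<lambda>i. H i z) ` S) \<in> (\<lambda>i. H i z) ` S"
        by (rule Max_in) (use SS Sne in auto)
      then obtain k where "k \<in> S" "Max ((\<lambda>i. H i z) ` S) = H k z"
        by auto
      then show "z \<in> (\<Union>i\<in>S. (N \<inter> U) \<inter> W i)" using z N(3)[of z] W_def by auto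
    qed
  qed auto
  then show ?thesis using P1 N U(1) p by (intro conjI exI[of _ "N \<inter> U"]) auto
qed

end
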